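(* Let $P,Q$ be finite posets and $R$ an indecomposable commutative unital ring. If $I^3(P,R)$ and $I^3(Q,R)$ are isomorphic as $R$-algebras (via an $R$-linear multiplicative bijection), then $P$ and $Q$ are isomorphic posets.
   Context: A commutative ring $R$ is indecomposable if its only idempotents are $0$ and $1$. For a finite poset $P$, let $P^3_\le=\{(x,y,z)\in P^3: x\le y\le z\}$. The third partial flag incidence algebra $I^3(P,R)$ is the $R$-module of all functions $f:P^3_\le\to R$ (pointwise operations) with the (non-associative) multiplication $(fg)(x_1,x_2,x_3)=\sum f(x_1,y_1,y_2)\,g(y_1,y_2,x_3)$, the sum over all $y_1,y_2$ with $x_1\le y_1\le x_2\le y_2\le x_3$. *)

theory Defs
  imports Main
begin

text \<open>Elements are functions P^3 \<rightarrow> R that vanish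
  outside P^3_\<le> = {(x,y,z). x \<le> y \<le> z}, so this set is in bijection with all
  functions P^3_\<le> \<rightarrow> R.\<close>

definition I3 :: "('a::order \<times> 'a \<times> 'a \<Rightarrow> 'r::comm_ring_1) set" where
  "I3 = {f. \<forall>x y z. \<not> (x \<le> y \<and> y \<le> z) \<longrightarrow> f (x, y, z) = 0}"

definition I3_mult :: "('a::{order,finite} \<times> 'a \<times> 'a \<Rightarrow> 'r::comm_ring_1)
    \<Rightarrow> ('a \<times> 'a \<times> 'a \<Rightarrow> 'r) \<Rightarrow> ('a \<times> 'a \<times> 'a \<Rightarrow> 'r)" where
  "I3_mult f g = (\<lambda>(x1, x2, x3).
     if x1 \<le> x2 \<and> x2 \<le> x3 then
       (\<Sum>(y1, y2) \<in> {(y1, y2). x1 \<le> y1 \<and> y1 \<le> x2 \<and> x2 \<le> y2 \<and> y2 \<le> x3}.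
          f (x1, y1, y2) * g (y1, y2, x3))
     else 0)"

definition indecomposable :: "'r::comm_ring_1 itself \<Rightarrow> bool" where
  "indecomposable _ \<longleftrightarrow> (\<forall>e::'r. e * e = e \<longrightarrow> e = 0 \<or> e = 1)"

definition I3_algebra_iso ::
  "(('a::{order,finite} \<times> 'a \<times> 'a \<Rightarrow> 'r::comm_ring_1) \<Rightarrow> ('b::{order,finite} \<times> 'b \<times> 'b \<Rightarrow> 'r))
   \<Rightarrow> bool" where
  "I3_algebra_iso \<phi> \<longleftrightarrow>
     bij_betw \<phi> I3 I3 \<and>
     (\<forall>f\<in>I3. \<forall>g\<in>I3. \<phi> (\<lambda>t. f t + g t) = (\<lambda>t. \<phi> f t + \<phi> g t)) \<and>
     (\<forall>c. \<forall>f\<in>I3. \<phi> (\<lambda>t. c * f t) = (\<lambda>t. c * \<phi> f t)) \<and>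
     (\<forall>f\<in>I3. \<forall>g\<in>I3. \<phi> (I3_mult f g) = I3_mult (\<phi> f) (\<phi> g))"

definition poset_iso :: "('a::order \<Rightarrow> 'b::order) \<Rightarrow> bool" where
  "poset_iso h \<longleftrightarrow> bij h \<and> (\<forall>x y. x \<le> y \<longleftrightarrow> h x \<le> h y)"

end

theory Submission
  imports Defs
begin


definition E3 :: "'a \<Rightarrow> 'a \<Rightarrow> 'a \<Rightarrow> ('a \<times> 'a \<times> 'a \<Rightarrow> 'r::comm_ring_1)" where
  "E3 a b c = (\<lambda>t. if t = (a,b,c) then 1 else 0)"

lemma E3_I3: "a \<le> b \<Longrightarrow> b \<le> c \<Longrightarrow> E3 a b c \<in> I3"
  by (auto simp: E3_def I3_def)

lemma E3_app: "E3 a b c (x,y,z) = (if x = a \<and> y = b \<and> z = c then 1 else 0)"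
  by (auto simp: E3_def)

lemma zero_I3: "(\<lambda>_. 0) \<in> I3" by (simp add: I3_def)

lemma I3_zero: "f \<in> I3 \<Longrightarrow> \<not> (x \<le> y \<and> y \<le> z) \<Longrightarrow> f (x,y,z) = 0"
  by (simp add: I3_def)

lemma mult_app: "I3_mult f g (x1,x2,x3) = (if x1 \<le> x2 \<and> x2 \<le> x3 then
   (\<Sum>(y1,y2)\<in>{(y1,y2). x1 \<le> y1 \<and> y1 \<le> x2 \<and> x2 \<le> y2 \<and> y2 \<le> x3}. f (x1,y1,y2) * g (y1,y2,x3)) else 0)"
  by (simp add: I3_mult_def)

lemma mult_I3: "I3_mult f g \<in> I3"
  by (simp add: I3_def mult_app)

lemma sum_single:
  assumes "finite S" "\<And>y. y \<in> S \<Longrightarrow> y \<noteq> c \<Longrightarrow> F y = 0"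
  shows "sum F S = (if c \<in> S then F c else 0)"
proof (cases "c \<in> S")
  case True
  have "sum F S = F c + sum F (S - {c})" using assms(1) True by (simp add: sum.remove)
  also have "sum F (S - {c}) = 0" using assms(2) by (intro sum.neutral) auto
  finally show ?thesis using True by simp
next
  case False
  have "sum F S = 0" by (rule sum.neutral) (use assms False in blast)
  then show ?thesis using False by simp
qed

lemma diag_mult: "I3_mult f g (q,q,q) = f (q,q,q) * g (q,q,q)"
proof -
  have "{(y1,y2). q \<le> y1 \<and> y1 \<le> q \<and> q \<le> y2 \<and> y2 \<le> q} = {(q,q)}"
    by (auto intro: order_antisym)
  then show ?thesis by (simp add: mult_app)
qed

lemma eps_left:
  fixes g :: "'a::{order,finite} \<times> 'a \<times> 'a \<Rightarrow> 'r::comm_ring_1"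
  assumes "g \<in> I3"
  shows "I3_mult (E3 x x x) g (a,m,c) = (if a = x \<and> m = x then g (x,x,c) else 0)"
proof -
  have "I3_mult (E3 x x x) g (a,m,c) = (if a \<le> m \<and> m \<le> c then
     (if (x,x) \<in> {(y1,y2). a \<le> y1 \<and> y1 \<le> m \<and> m \<le> y2 \<and> y2 \<le> c}
      then E3 x x x (a,x,x) * g (x,x,c) else 0) else 0)"
    unfolding mult_app
    by (subst sum_single[where c="(x,x)"]) (auto simp: E3_app split: if_splits)
  then show ?thesis using assms by (auto simp: E3_app I3_def intro: order_antisym)
qed

lemma eps_right:
  fixes g :: "'a::{order,finite} \<times> 'a \<times> 'a \<Rightarrow> 'r::comm_ring_1"
  assumes "g \<in> I3"
  shows "I3_mult g (E3 y y y) (a,m,c) = (if m = y \<and> c = y then g (a,y,y) else 0)"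
proof -
  have "I3_mult g (E3 y y y) (a,m,c) = (if a \<le> m \<and> m \<le> c then
     (if (y,y) \<in> {(y1,y2). a \<le> y1 \<and> y1 \<le> m \<and> m \<le> y2 \<and> y2 \<le> c}
      then g (a,y,y) * E3 y y y (y,y,c) else 0) else 0)"
    unfolding mult_app
    by (subst sum_single[where c="(y,y)"]) (auto simp: E3_app split: if_splits)
  then show ?thesis using assms by (auto simp: E3_app I3_def intro: order_antisym)
qed

lemma eps_L:
  fixes g :: "'a::{order,finite} \<times> 'a \<times> 'a \<Rightarrow> 'r::comm_ring_1"
  assumes "g \<in> I3"
  shows "I3_mult (E3 x x x) (I3_mult (E3 x x x) g) = I3_mult (E3 x x x) g"
proof
  fix t :: "'a \<times> 'a \<times> 'a"
  obtain a m c where t: "t = (a,m,c)" by (cases t) auto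
  show "I3_mult (E3 x x x) (I3_mult (E3 x x x) g) t = I3_mult (E3 x x x) g t"
    unfolding t by (simp add: eps_left assms mult_I3)
qed

lemma eps_idem: "I3_mult (E3 x x x) (E3 x x x) = (E3 (x::'a::{order,finite}) x x :: _ \<Rightarrow> 'r::comm_ring_1)"
proof
  fix t :: "'a \<times> 'a \<times> 'a"
  obtain a m c where t: "t = (a,m,c)" by (cases t) auto
  show "I3_mult (E3 x x x) (E3 x x x) t = (E3 x x x t :: 'r)"
    unfolding t by (simp add: eps_left E3_I3 E3_app)
qed

lemma eps_orth: "x \<noteq> y \<Longrightarrow> I3_mult (E3 x x x) (E3 y y y) = (\<lambda>_. 0 :: 'r::comm_ring_1)"
  for x y :: "'a::{order,finite}"
proof
  fix t :: "'a \<times> 'a \<times> 'a"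
  assume "x \<noteq> y"
  obtain a m c where t: "t = (a,m,c)" by (cases t) auto
  show "I3_mult (E3 x x x) (E3 y y y) t = (0::'r)"
    unfolding t using \<open>x \<noteq> y\<close> by (simp add: eps_left E3_I3 E3_app)
qed


lemma E_right_gen:
  fixes f :: "'a::{order,finite} \<times> 'a \<times> 'a \<Rightarrow> 'r::comm_ring_1"
  assumes "f \<in> I3" "b \<le> c"
  shows "I3_mult f (E3 b b c) (a,m,z) = (if m = b \<and> z = c then f (a,b,b) else 0)"
proof -
  have "I3_mult f (E3 b b c) (a,m,z) = (if a \<le> m \<and> m \<le> z then
     (if (b,b) \<in> {(y1,y2). a \<le> y1 \<and> y1 \<le> m \<and> m \<le> y2 \<and> y2 \<le> z}
      then f (a,b,b) * E3 b b c (b,b,z) else 0) else 0)"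
    unfolding mult_app
    by (subst sum_single[where c="(b,b)"]) (auto simp: E3_app split: if_splits)
  then show ?thesis using assms by (auto simp: E3_app I3_def intro: order_antisym)
qed

lemma E_left_gen:
  fixes f :: "'a::{order,finite} \<times> 'a \<times> 'a \<Rightarrow> 'r::comm_ring_1"
  assumes "f \<in> I3" "a \<le> b"
  shows "I3_mult (E3 a b b) f (x,m,z) = (if x = a \<and> m = b then f (b,b,z) else 0)"
proof -
  have "I3_mult (E3 a b b) f (x,m,z) = (if x \<le> m \<and> m \<le> z then
     (if (b,b) \<in> {(y1,y2). x \<le> y1 \<and> y1 \<le> m \<and> m \<le> y2 \<and> y2 \<le> z}
      then E3 a b b (x,b,b) * f (b,b,z) else 0) else 0)"
    unfolding mult_app
    by (subst sum_single[where c="(b,b)"]) (auto simp: E3_app split: if_splits)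
  then show ?thesis using assms by (auto simp: E3_app I3_def intro: order_antisym order_trans)
qed

lemma rel_B:
  fixes f f' :: "'a::{order,finite} \<times> 'a \<times> 'a \<Rightarrow> 'r::comm_ring_1"
  assumes "f \<in> I3" "f' \<in> I3" "f (p,p,p) = 1" "f' (q,q,q) = 1" "p \<le> q"
  shows "I3_mult (I3_mult f (E3 p p q)) (I3_mult (E3 p q q) f') (p,p,q) = 1"
proof -
  have "I3_mult (I3_mult f (E3 p p q)) (I3_mult (E3 p q q) f') (p,p,q) =
     (if (p,q) \<in> {(y1,y2). p \<le> y1 \<and> y1 \<le> p \<and> p \<le> y2 \<and> y2 \<le> q}
      then I3_mult f (E3 p p q) (p,p,q) * I3_mult (E3 p q q) f' (p,q,q) else 0)"
    unfolding mult_app[of "I3_mult f (E3 p p q)" "I3_mult (E3 p q q) f'" p p q] using assms(5)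
    by (subst sum_single[where c="(p,q)"]) (auto simp: E_right_gen[OF assms(1,5)] split: if_splits)
  then show ?thesis using assms by (simp add: E_right_gen E_left_gen)
qed

lemma rel_A:
  fixes g k :: "'a::{order,finite} \<times> 'a \<times> 'a \<Rightarrow> 'r::comm_ring_1"
  assumes "g \<in> I3" "k \<in> I3"
    and "I3_mult (I3_mult (E3 x x x) g) (I3_mult k (E3 y y y)) \<noteq> (\<lambda>_. 0)"
  shows "x \<le> y"
proof -
  obtain t where t: "I3_mult (I3_mult (E3 x x x) g) (I3_mult k (E3 y y y)) t \<noteq> 0"
    using assms(3) by (metis ext)
  obtain a m c where tt: "t = (a,m,c)" by (cases t) auto
  from t[unfolded tt mult_app[of "I3_mult (E3 x x x) g" "I3_mult k (E3 y y y)" a m c]] have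
    "(\<Sum>(y1,y2)\<in>{(y1,y2). a \<le> y1 \<and> y1 \<le> m \<and> m \<le> y2 \<and> y2 \<le> c}.
       I3_mult (E3 x x x) g (a,y1,y2) * I3_mult k (E3 y y y) (y1,y2,c)) \<noteq> 0"
    by (simp split: if_splits)
  then obtain yy where yy: "yy \<in> {(y1,y2). a \<le> y1 \<and> y1 \<le> m \<and> m \<le> y2 \<and> y2 \<le> c}"
    "(\<lambda>(y1,y2). I3_mult (E3 x x x) g (a,y1,y2) * I3_mult k (E3 y y y) (y1,y2,c)) yy \<noteq> 0"
    by (rule sum.not_neutral_contains_not_neutral)
  obtain y1 y2 where "yy = (y1,y2)" by (cases yy) auto
  with yy have mem: "a \<le> y1 \<and> y1 \<le> m \<and> m \<le> y2 \<and> y2 \<le> c" and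
    nz: "I3_mult (E3 x x x) g (a,y1,y2) * I3_mult k (E3 y y y) (y1,y2,c) \<noteq> 0" by auto
  from nz have "y1 = x" "y2 = y" by (auto simp: eps_left eps_right assms split: if_splits)
  with mem show ?thesis by auto
qed



lemma key_zero_diag:
  fixes e :: "'a::{order,finite} \<times> 'a \<times> 'a \<Rightarrow> 'r::comm_ring_1"
  assumes eI: "e \<in> I3" and idem: "I3_mult e e = e"
    and L: "\<forall>g\<in>I3. I3_mult e (I3_mult e g) = I3_mult e g"
    and diag: "\<forall>q. e (q,q,q) = 0"
  shows "e = (\<lambda>_. 0)"
proof (rule ccontr)
  assume "e \<noteq> (\<lambda>_. 0)"
  then obtain t where "e t \<noteq> 0" by (metis ext)
  obtain x0 m0 z0 where "t = (x0,m0,z0)" by (cases t) auto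
  define S where "S = {(x,z). \<exists>m. e (x,m,z) \<noteq> 0}"
  define cc where "cc = (\<lambda>(x,z). card {w::'a. x \<le> w \<and> w \<le> z})"
  have "(x0,z0) \<in> S" using \<open>e t \<noteq> 0\<close> \<open>t = _\<close> by (auto simp: S_def)
  then obtain p where pS: "p \<in> S" and minc: "\<forall>p'. p' \<in> S \<longrightarrow> cc p \<le> cc p'"
    using ex_has_least_nat[of "\<lambda>p. p \<in> S" "(x0,z0)" cc] by blast
  obtain x z where p: "p = (x,z)" by (cases p) auto
  have small: "e (x',m,z') = 0" if "x \<le> x'" "x' \<le> z'" "z' \<le> z" "(x',z') \<noteq> (x,z)" for x' z' m
  proof (rule ccontr)
    assume "e (x',m,z') \<noteq> 0"
    then have "(x',z') \<in> S" by (auto simp: S_def)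
    then have ge: "cc (x,z) \<le> cc (x',z')" using minc p by auto
    have "{w. x' \<le> w \<and> w \<le> z'} \<subset> {w. x \<le> w \<and> w \<le> z}"
    proof
      show "{w. x' \<le> w \<and> w \<le> z'} \<subseteq> {w. x \<le> w \<and> w \<le> z}"
        using that by (auto intro: order_trans)
      show "{w. x' \<le> w \<and> w \<le> z'} \<noteq> {w. x \<le> w \<and> w \<le> z}"
      proof
        assume eq: "{w. x' \<le> w \<and> w \<le> z'} = {w. x \<le> w \<and> w \<le> z}"
        have "x \<le> z" using that by (auto intro: order_trans)
        then have "x \<in> {w. x' \<le> w \<and> w \<le> z'}" "z \<in> {w. x' \<le> w \<and> w \<le> z'}"
          by (subst eq; simp)+
        then show False using that by (auto intro: order_antisym)
      qed
    qed
    then have "cc (x',z') < cc (x,z)" unfolding cc_def by (simp add: psubset_card_mono)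
    with ge show False by simp
  qed
  from pS p obtain m1 where m1: "e (x,m1,z) \<noteq> 0" by (auto simp: S_def)
  then have xm1: "x \<le> m1" "m1 \<le> z" using eI by (auto simp: I3_def)
  define a where "a = e (x,x,z) * e (x,z,z)"
  have val: "e (x,m,z) = a" if "x \<le> m" "m \<le> z" for m
  proof -
    have "e (x,m,z) = I3_mult e e (x,m,z)" using idem by simp
    also have "\<dots> = (\<Sum>(y1,y2)\<in>{(y1,y2). x \<le> y1 \<and> y1 \<le> m \<and> m \<le> y2 \<and> y2 \<le> z}.
        e (x,y1,y2) * e (y1,y2,z))"
      using that by (simp add: mult_app)
    also have "\<dots> = e (x,x,z) * e (x,z,z)"
    proof (subst sum_single[where c="(x,z)"])
      show "finite {(y1,y2). x \<le> y1 \<and> y1 \<le> m \<and> m \<le> y2 \<and> y2 \<le> z}" by simp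
      show "(if (x,z) \<in> {(y1,y2). x \<le> y1 \<and> y1 \<le> m \<and> m \<le> y2 \<and> y2 \<le> z}
          then (\<lambda>(y1,y2). e (x,y1,y2) * e (y1,y2,z)) (x,z) else 0) = e (x,x,z) * e (x,z,z)"
        using that by simp
      fix yy assume yy: "yy \<in> {(y1,y2). x \<le> y1 \<and> y1 \<le> m \<and> m \<le> y2 \<and> y2 \<le> z}" "yy \<noteq> (x,z)"
      obtain y1 y2 where yy12: "yy = (y1,y2)" by (cases yy) auto
      have h: "x \<le> y1" "y1 \<le> m" "m \<le> y2" "y2 \<le> z" using yy yy12 by auto
      show "(\<lambda>(y1,y2). e (x,y1,y2) * e (y1,y2,z)) yy = 0"
      proof (cases "y2 = z")
        case True
        then have "y1 \<noteq> x" using yy yy12 by auto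
        have "y1 \<le> z" using h order_trans by metis
        then have "e (y1,z,z) = 0" using small[of y1 z z] h \<open>y1 \<noteq> x\<close> by auto
        then show ?thesis using yy12 True by simp
      next
        case False
        have "x \<le> y2" using h order_trans by metis
        then have "e (x,y1,y2) = 0" using small[of x y2 y1] h False by auto
        then show ?thesis using yy12 by simp
      qed
    qed
    also have "\<dots> = a" using that by (simp add: a_def)
    finally show ?thesis .
  qed
  have "a \<noteq> 0" using val[OF xm1] m1 by simp
  have "x \<noteq> z"
  proof
    assume "x = z"
    then have "m1 = x" using xm1 by (auto intro: order_antisym)
    then show False using m1 diag \<open>x = z\<close> by simp
  qed
  define G where "G = I3_mult e (E3 z z z)"
  have GI: "G \<in> I3" by (simp add: G_def mult_I3)
  have G0: "G (x,x,z) = 0" using \<open>x \<noteq> z\<close> by (simp add: G_def eps_right eI)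
  have xz: "x \<le> z" using xm1 by (metis order_trans)
  have "I3_mult e G (x,x,z) = (\<Sum>(y1,y2)\<in>{(y1,y2). x \<le> y1 \<and> y1 \<le> x \<and> x \<le> y2 \<and> y2 \<le> z}.
        e (x,y1,y2) * G (y1,y2,z))"
    using xz by (simp add: mult_app)
  also have "\<dots> = e (x,x,z) * G (x,z,z)"
  proof (subst sum_single[where c="(x,z)"])
    show "finite {(y1,y2). x \<le> y1 \<and> y1 \<le> x \<and> x \<le> y2 \<and> y2 \<le> z}" by simp
    show "(if (x,z) \<in> {(y1,y2). x \<le> y1 \<and> y1 \<le> x \<and> x \<le> y2 \<and> y2 \<le> z}
        then (\<lambda>(y1,y2). e (x,y1,y2) * G (y1,y2,z)) (x,z) else 0) = e (x,x,z) * G (x,z,z)"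
      using xz by simp
    fix yy assume yy: "yy \<in> {(y1,y2). x \<le> y1 \<and> y1 \<le> x \<and> x \<le> y2 \<and> y2 \<le> z}" "yy \<noteq> (x,z)"
    obtain y1 y2 where yy12: "yy = (y1,y2)" by (cases yy) auto
    have "y1 = x" using yy yy12 by (auto intro: order_antisym)
    then have "y2 \<noteq> z" using yy yy12 by auto
    then have "G (y1,y2,z) = 0" by (simp add: G_def eps_right eI)
    then show "(\<lambda>(y1,y2). e (x,y1,y2) * G (y1,y2,z)) yy = 0" using yy12 by simp
  qed
  also have "\<dots> = a" by (simp add: G_def eps_right eI a_def)
  finally have "I3_mult e G (x,x,z) = a" .
  moreover have "I3_mult e G = G" unfolding G_def by (rule L[rule_format]) (simp add: E3_I3)
  ultimately show False using G0 \<open>a \<noteq> 0\<close> by simp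
qed



lemma half:
  fixes \<Phi> :: "('a::{order,finite} \<times> 'a \<times> 'a \<Rightarrow> 'r::comm_ring_1) \<Rightarrow> ('b::{order,finite} \<times> 'b \<times> 'b \<Rightarrow> 'r)"
  assumes ind: "indecomposable TYPE('r)" and bij: "bij_betw \<Phi> I3 I3" and z: "\<Phi> (\<lambda>_. 0) = (\<lambda>_. 0)"
    and mult: "\<forall>f\<in>I3. \<forall>g\<in>I3. \<Phi> (I3_mult f g) = I3_mult (\<Phi> f) (\<Phi> g)"
  shows "\<exists>h::'a\<Rightarrow>'b. inj h \<and> (\<forall>x y. h x \<le> h y \<longrightarrow> x \<le> y)"
proof -
  have surj: "\<exists>g'\<in>I3. g = \<Phi> g'" if "g \<in> I3" for g
    using bij that by (auto simp: bij_betw_def)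
  have EI: "E3 x x x \<in> (I3 :: ('a\<times>'a\<times>'a \<Rightarrow> 'r) set)" for x :: 'a by (simp add: E3_I3)
  define F where "F x = \<Phi> (E3 x x x)" for x
  have FI: "F x \<in> I3" for x using bij EI by (auto simp: F_def bij_betw_def)
  have Fidem: "I3_mult (F x) (F x) = F x" for x
  proof -
    have "\<Phi> (I3_mult (E3 x x x) (E3 x x x)) = I3_mult (F x) (F x)" using mult EI unfolding F_def by blast
    then show ?thesis by (simp add: eps_idem F_def)
  qed
  have FL: "\<forall>g\<in>I3. I3_mult (F x) (I3_mult (F x) g) = I3_mult (F x) g" for x
  proof
    fix g :: "'b\<times>'b\<times>'b \<Rightarrow> 'r" assume "g \<in> I3"
    then obtain g' where g': "g' \<in> I3" "g = \<Phi> g'" using surj by blast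
    have 1: "I3_mult (F x) g = \<Phi> (I3_mult (E3 x x x) g')" using mult g' EI by (simp add: F_def)
    have 2: "I3_mult (F x) (\<Phi> (I3_mult (E3 x x x) g')) = \<Phi> (I3_mult (E3 x x x) (I3_mult (E3 x x x) g'))"
      using mult[rule_format, OF EI[of x] mult_I3[of "E3 x x x" g']] unfolding F_def 1[unfolded F_def] by simp
    show "I3_mult (F x) (I3_mult (F x) g) = I3_mult (F x) g"
      unfolding 1 2 using eps_L[OF g'(1)] by simp
  qed
  have Fnz: "F x \<noteq> (\<lambda>_. 0)" for x
  proof
    assume "F x = (\<lambda>_. 0)"
    then have "\<Phi> (E3 x x x) = \<Phi> (\<lambda>_. 0)" using z by (simp add: F_def)
    then have "E3 x x x = (\<lambda>_. 0 :: 'r)"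
      using bij EI zero_I3 by (auto simp: bij_betw_def inj_on_def)
    then have "E3 x x x (x,x,x) = (0::'r)" by simp
    then show False by (simp add: E3_app)
  qed
  have ex: "\<exists>q. F x (q,q,q) \<noteq> 0" for x
    using key_zero_diag[OF FI Fidem FL] Fnz by blast
  define h where "h x = (SOME q. F x (q,q,q) \<noteq> 0)" for x
  have h1: "F x (h x, h x, h x) = 1" for x
  proof -
    have nz: "F x (h x,h x,h x) \<noteq> 0" unfolding h_def using someI_ex[OF ex] .
    have "F x (h x,h x,h x) * F x (h x,h x,h x) = F x (h x,h x,h x)"
      using diag_mult[of "F x" "F x" "h x"] Fidem by simp
    with ind nz show ?thesis by (auto simp: indecomposable_def)
  qed
  have orth: "I3_mult (F x) (F y) = (\<lambda>_. 0)" if "x \<noteq> y" for x y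
    using mult[rule_format, OF EI[of x] EI[of y]] z that unfolding F_def by (simp add: eps_orth)
  have "inj h"
  proof (rule injI, rule ccontr)
    fix x y assume hxy: "h x = h y" and "x \<noteq> y"
    have "I3_mult (F x) (F y) (h x,h x,h x) = F x (h x,h x,h x) * F y (h x,h x,h x)" by (rule diag_mult)
    also have "\<dots> = 1" using h1[of x] h1[of y] hxy by simp
    finally have "I3_mult (F x) (F y) (h x,h x,h x) = 1" .
    with orth[OF \<open>x \<noteq> y\<close>] show False by simp
  qed
  moreover have "h x \<le> h y \<longrightarrow> x \<le> y" for x y
  proof
    assume le: "h x \<le> h y"
    have gI: "E3 (h x) (h x) (h y) \<in> I3" using le by (simp add: E3_I3)
    have kI: "E3 (h x) (h y) (h y) \<in> I3" using le by (simp add: E3_I3)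
    obtain g' where g': "g' \<in> I3" "E3 (h x) (h x) (h y) = \<Phi> g'" using surj[OF gI] by blast
    obtain k' where k': "k' \<in> I3" "E3 (h x) (h y) (h y) = \<Phi> k'" using surj[OF kI] by blast
    have one: "I3_mult (I3_mult (F x) (E3 (h x) (h x) (h y))) (I3_mult (E3 (h x) (h y) (h y)) (F y)) (h x,h x,h y) = 1"
      by (rule rel_B[OF FI FI h1 h1 le])
    have "I3_mult (I3_mult (F x) (E3 (h x) (h x) (h y))) (I3_mult (E3 (h x) (h y) (h y)) (F y))
       = \<Phi> (I3_mult (I3_mult (E3 x x x) g') (I3_mult k' (E3 y y y)))"
      unfolding g'(2) k'(2) F_def
      using mult[rule_format, OF mult_I3[of "E3 x x x" g'] mult_I3[of k' "E3 y y y"]]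
        mult[rule_format, OF EI[of x] g'(1)] mult[rule_format, OF k'(1) EI[of y]] by simp
    then have "I3_mult (I3_mult (E3 x x x) g') (I3_mult k' (E3 y y y)) \<noteq> (\<lambda>_. 0)"
    proof (intro notI)
      assume eq: "I3_mult (I3_mult (F x) (E3 (h x) (h x) (h y))) (I3_mult (E3 (h x) (h y) (h y)) (F y))
       = \<Phi> (I3_mult (I3_mult (E3 x x x) g') (I3_mult k' (E3 y y y)))"
        and eq0: "I3_mult (I3_mult (E3 x x x) g') (I3_mult k' (E3 y y y)) = (\<lambda>_. 0)"
      have "I3_mult (I3_mult (F x) (E3 (h x) (h x) (h y))) (I3_mult (E3 (h x) (h y) (h y)) (F y)) = (\<lambda>_. 0)"
        unfolding eq eq0 z ..
      then show False using one by simp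
    qed
    then show "x \<le> y" by (rule rel_A[OF g'(1) k'(1)])
  qed
  ultimately show ?thesis by blast
qed

lemma inv_props:
  fixes \<Phi> :: "('a::{order,finite} \<times> 'a \<times> 'a \<Rightarrow> 'r::comm_ring_1) \<Rightarrow> ('b::{order,finite} \<times> 'b \<times> 'b \<Rightarrow> 'r)"
  assumes bij: "bij_betw \<Phi> I3 I3" and z: "\<Phi> (\<lambda>_. 0) = (\<lambda>_. 0)"
    and mult: "\<forall>f\<in>I3. \<forall>g\<in>I3. \<Phi> (I3_mult f g) = I3_mult (\<Phi> f) (\<Phi> g)"
  shows "bij_betw (inv_into I3 \<Phi>) I3 I3" "inv_into I3 \<Phi> (\<lambda>_. 0) = (\<lambda>_. 0)"
    "\<forall>f\<in>I3. \<forall>g\<in>I3. inv_into I3 \<Phi> (I3_mult f g) = I3_mult (inv_into I3 \<Phi> f) (inv_into I3 \<Phi> g)"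
proof -
  have inj: "inj_on \<Phi> I3" and im: "\<Phi> ` I3 = I3" using bij by (auto simp: bij_betw_def)
  show "bij_betw (inv_into I3 \<Phi>) I3 I3" using bij_betw_inv_into[OF bij] .
  show "inv_into I3 \<Phi> (\<lambda>_. 0) = (\<lambda>_. 0)" by (rule inv_into_f_eq[OF inj]) (simp_all add: zero_I3 z)
  show "\<forall>f\<in>I3. \<forall>g\<in>I3. inv_into I3 \<Phi> (I3_mult f g) = I3_mult (inv_into I3 \<Phi> f) (inv_into I3 \<Phi> g)"
  proof (intro ballI)
    fix f g :: "'b \<times> 'b \<times> 'b \<Rightarrow> 'r" assume f: "f \<in> I3" and g: "g \<in> I3"
    have fi: "inv_into I3 \<Phi> f \<in> I3" and gi: "inv_into I3 \<Phi> g \<in> I3"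
      using f g im by (auto intro: inv_into_into)
    have "\<Phi> (I3_mult (inv_into I3 \<Phi> f) (inv_into I3 \<Phi> g)) = I3_mult f g"
      using mult fi gi f g im by (simp add: f_inv_into_f)
    then show "inv_into I3 \<Phi> (I3_mult f g) = I3_mult (inv_into I3 \<Phi> f) (inv_into I3 \<Phi> g)"
      by (intro inv_into_f_eq[OF inj] mult_I3)
  qed
qed

lemma pairs_card:
  fixes h :: "'a::{order,finite} \<Rightarrow> 'b::{order,finite}"
  assumes "bij h"
  shows "card {(x,y). h x \<le> h y} = card {(u::'b,v). u \<le> v}"
proof -
  have inj: "inj_on (\<lambda>(x,y). (h x, h y)) {(x,y). h x \<le> h y}"
    using assms by (auto simp: inj_on_def bij_def inj_eq)
  have "(\<lambda>(x,y). (h x, h y)) ` {(x,y). h x \<le> h y} = {(u,v). u \<le> v}"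
  proof (rule set_eqI, rule iffI)
    fix p assume "p \<in> {(u::'b,v). u \<le> v}"
    then obtain u v where p: "p = (u,v)" "u \<le> v" by auto
    have "u = h (inv h u)" "v = h (inv h v)" using assms by (auto simp: bij_def surj_f_inv_f)
    then show "p \<in> (\<lambda>(x,y). (h x, h y)) ` {(x,y). h x \<le> h y}"
      using p by (auto intro!: image_eqI[where x="(inv h u, inv h v)"])
  qed auto
  then show ?thesis using card_image[OF inj] by simp
qed

theorem theorem3p5:
  fixes \<Phi> :: "('a::{order,finite} \<times> 'a \<times> 'a \<Rightarrow> 'r::comm_ring_1) \<Rightarrow> ('b::{order,finite} \<times> 'b \<times> 'b \<Rightarrow> 'r)"
  assumes "indecomposable TYPE('r)"
    and "I3_algebra_iso \<Phi>"
  shows "\<exists>h :: 'a \<Rightarrow> 'b. poset_iso h"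
proof -
  have bij: "bij_betw \<Phi> I3 I3" and mult: "\<forall>f\<in>I3. \<forall>g\<in>I3. \<Phi> (I3_mult f g) = I3_mult (\<Phi> f) (\<Phi> g)"
    and sc: "\<forall>c. \<forall>f\<in>I3. \<Phi> (\<lambda>t. c * f t) = (\<lambda>t. c * \<Phi> f t)"
    using assms(2) by (auto simp: I3_algebra_iso_def)
  have z: "\<Phi> (\<lambda>_. 0) = (\<lambda>_. 0)"
    using sc[rule_format, of "(\<lambda>_. 0)" 0] zero_I3 by simp
  obtain h :: "'a \<Rightarrow> 'b" where hinj: "inj h" and hr: "\<forall>x y. h x \<le> h y \<longrightarrow> x \<le> y"
    using half[OF assms(1) bij z mult] by blast
  obtain h' :: "'b \<Rightarrow> 'a" where h'inj: "inj h'" and h'r: "\<forall>x y. h' x \<le> h' y \<longrightarrow> x \<le> y"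
    using half[OF assms(1) inv_props[OF bij z mult]] by blast
  have c1: "card (UNIV::'a set) \<le> card (UNIV::'b set)"
    using card_inj_on_le[OF hinj] by simp
  have c2: "card (UNIV::'b set) \<le> card (UNIV::'a set)"
    using card_inj_on_le[OF h'inj] by simp
  have "h ` UNIV = UNIV"
    using card_image[OF hinj] c2 by (intro card_seteq) auto
  then have bh: "bij h" using hinj by (simp add: bij_def)
  have "h' ` UNIV = UNIV"
    using card_image[OF h'inj] c1 by (intro card_seteq) auto
  then have bh': "bij h'" using h'inj by (simp add: bij_def)
  have T: "{(x,y). h x \<le> h y} \<subseteq> {(x::'a,y). x \<le> y}" using hr by auto
  have T': "{(u,v). h' u \<le> h' v} \<subseteq> {(u::'b,v). u \<le> v}" using h'r by auto
  have "card {(x::'a,y). x \<le> y} = card {(u,v). h' u \<le> h' v}" using pairs_card[OF bh'] by simp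
  also have "\<dots> \<le> card {(u::'b,v). u \<le> v}" using T' by (intro card_mono) auto
  also have "\<dots> = card {(x,y). h x \<le> h y}" using pairs_card[OF bh] by simp
  finally have "{(x,y). h x \<le> h y} = {(x::'a,y). x \<le> y}"
    using T by (intro card_seteq) auto
  then have "\<forall>x y. x \<le> y \<longleftrightarrow> h x \<le> h y" by (auto simp: set_eq_iff)
  then show ?thesis using bh unfolding poset_iso_def by blast
qed

end
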